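(* Suppose that $\Re s=1$, $u\ge1$, and $|s|>u$. For integers $\nu\ge1$, \[ \left|\frac{\partial^{\nu}}{\partial u^{\nu}}G(u,s)\right|\ll_{\nu}\frac{|s|^{\nu-1}}{u^{2\nu-1}}, \] with implied constant depending only on $\nu$.
   Context: $G(u,s):=\int_{0}^{1/u}\frac{1-e^{-ts}}{t}\,dt$. *)

theory Defs
  imports "HOL-Analysis.Analysis"
begin

text \<open>G(u,s) = integral from 0 to 1/u of (1 - exp(-t s))/t dt (Henstock-Kurzweil integral,
  complex valued; the integrand at t = 0 is irrelevant).\<close>
definition G :: "real \<Rightarrow> complex \<Rightarrow> complex" where
  "G u s = integral {0..1/u} (\<lambda>t. (1 - exp (- (complex_of_real t * s))) / complex_of_real t)"

fun higher_vderiv :: "nat \<Rightarrow> (real \<Rightarrow> 'a::real_normed_vector) \<Rightarrow> real \<Rightarrow> 'a" where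
  "higher_vderiv 0 f = f"
| "higher_vderiv (Suc n) f = (\<lambda>u. vector_derivative (higher_vderiv n f) (at u))"

end

theory Submission imports Defs begin

lemma hv_shift: "higher_vderiv (Suc n) f = higher_vderiv n (\<lambda>u. vector_derivative f (at u))"
  by (induction n) auto

lemma hv_local:
  assumes "open S" "\<And>x. x \<in> S \<Longrightarrow> f x = g x"
  shows "x \<in> S \<Longrightarrow> higher_vderiv n f x = higher_vderiv n g x"
  using assms(2)
proof (induction n arbitrary: x)
  case 0 then show ?case by simp
next
  case (Suc n)
  have ev: "eventually (\<lambda>y. y \<in> UNIV \<longrightarrow> higher_vderiv n f y = higher_vderiv n g y) (nhds x)"
    using eventually_nhds_in_open[OF assms(1) Suc.prems(1)]
    by (rule eventually_mono) (use Suc in auto)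
  show ?case using vector_derivative_cong_eq[OF ev refl refl] by simp
qed

definition gc :: "complex \<Rightarrow> complex \<Rightarrow> complex" where
  "gc s z = (if z = 0 then s else (1 - exp (- (z * s))) / z)"

lemma gc_cont: "isCont (gc s) z"
proof (cases "z = 0")
  case True
  have "((\<lambda>z. exp (- (z * s))) has_field_derivative (- s)) (at 0)"
    by (auto intro!: derivative_eq_intros)
  then have "((\<lambda>y. (exp (- (y * s)) - exp (- (0 * s))) / (y - 0)) \<longlongrightarrow> - s) (at 0)"
    using has_field_derivative_iff[of "\<lambda>z. exp (- (z * s))" "-s" 0 UNIV] by simp
  then have "((\<lambda>y. - ((exp (- (y * s)) - 1) / y)) \<longlongrightarrow> - (- s)) (at 0)"
    by (intro tendsto_minus) simp
  then have "((\<lambda>y. (1 - exp (- (y * s))) / y) \<longlongrightarrow> s) (at 0)"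
    by (simp add: minus_divide_left)
  then have "(gc s \<longlongrightarrow> s) (at 0)"
    by (rule tendsto_cong[THEN iffD1, rotated]) (auto simp: gc_def eventually_at_filter)
  then show ?thesis using True by (simp add: isCont_def gc_def)
next
  case False
  have "eventually (\<lambda>y. y \<noteq> 0) (nhds z)"
    using eventually_nhds_in_open[of "-{0}" z] False by auto
  then have "eventually (\<lambda>y. gc s y = (1 - exp (- (y * s))) / y) (nhds z)"
    by (rule eventually_mono) (simp add: gc_def)
  moreover have "isCont (\<lambda>y. (1 - exp (- (y * s))) / y) z"
    using False by (auto intro!: continuous_intros)
  ultimately show ?thesis using isCont_cong[of "gc s" _ z] by simp
qed

lemma G_eq: "G u s = integral {0..1/u} (\<lambda>t. gc s (of_real t))"
  unfolding G_def
  by (rule integral_spike[of "{0}"]) (auto simp: gc_def)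

definition Hc :: "complex \<Rightarrow> complex \<Rightarrow> complex" where
  "Hc s z = - (1 - exp (- s / z)) / z"

lemma I_deriv:
  assumes "b > 0"
  shows "((\<lambda>b. integral {0..b} (\<lambda>t. gc s (of_real t))) has_vector_derivative gc s (of_real b)) (at b)"
proof -
  have c: "continuous_on {0..b+1} (\<lambda>t. gc s (of_real t))"
  proof (rule continuous_at_imp_continuous_on, rule ballI)
    fix x :: real
    have "isCont (\<lambda>t::real. complex_of_real t) x" by (intro continuous_intros)
    then show "isCont (\<lambda>t. gc s (of_real t)) x" by (rule isCont_o2) (rule gc_cont)
  qed
  have "b \<in> interior {0..b+1}" using assms by simp
  then have "at b within {0..b+1} = at b" by (rule at_within_interior)
  moreover have "b \<in> {0..b+1}" using assms by simp
  ultimately show ?thesis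
    using integral_has_vector_derivative[OF c, of b] by metis
qed

lemma G_deriv:
  assumes "u > 0"
  shows "((\<lambda>x. G x s) has_vector_derivative Hc s (of_real u)) (at u)"
proof -
  have d1: "((\<lambda>x. 1 / x) has_vector_derivative (- 1 / u^2)) (at u)"
    using assms by (auto intro!: derivative_eq_intros simp: has_real_derivative_iff_has_vector_derivative[symmetric] power2_eq_square)
  have "(((\<lambda>b. integral {0..b} (\<lambda>t. gc s (of_real t))) \<circ> (\<lambda>x. 1 / x)) has_vector_derivative
     ((- 1 / u^2) *\<^sub>R gc s (of_real (1/u)))) (at u)"
    by (rule vector_diff_chain_at[OF d1 I_deriv]) (use assms in simp)
  moreover have "(- 1 / u^2) *\<^sub>R gc s (of_real (1/u)) = Hc s (of_real u)"
  proof -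
    have e: "- (complex_of_real (1/u) * s) = - s / of_real u" by (simp add: field_simps)
    have "gc s (of_real (1/u)) = of_real u * (1 - exp (- s / of_real u))"
      using assms by (simp add: gc_def e del: of_real_divide) (simp add: field_simps)
    then show ?thesis using assms
      by (simp add: Hc_def scaleR_conv_of_real power2_eq_square field_simps)
  qed
  ultimately have "(((\<lambda>b. integral {0..b} (\<lambda>t. gc s (of_real t))) \<circ> (\<lambda>x. 1 / x)) has_vector_derivative
     Hc s (of_real u)) (at u)" by simp
  then show ?thesis
    by (rule has_vector_derivative_transform_within_open[of _ _ _ "{0<..}"]) (use assms in \<open>auto simp: G_eq\<close>)
qed

lemma G_hv:
  assumes "u > 0"
  shows "higher_vderiv (Suc k) (\<lambda>x. G x s) u = higher_vderiv k (\<lambda>x. Hc s (of_real x)) u"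
  unfolding hv_shift
proof (rule hv_local[of "{0<..}"])
  fix x :: real assume "x \<in> {0<..}"
  then show "vector_derivative (\<lambda>x. G x s) (at x) = Hc s (of_real x)"
    by (intro vector_derivative_at G_deriv) simp
qed (use assms in auto)



definition Tm :: "nat \<Rightarrow> nat \<Rightarrow> complex \<Rightarrow> complex \<Rightarrow> complex" where
  "Tm m j s z = s ^ j * exp (- s / z) / z ^ m"

lemma Tm_deriv:
  assumes "z \<noteq> 0"
  shows "(Tm m j s has_field_derivative (Tm (m+2) (Suc j) s z - of_nat m * Tm (Suc m) j s z)) (at z)"
proof -
  have "((\<lambda>z. s ^ j * exp (- s / z) / z ^ m) has_field_derivative
     (s ^ j * (exp (- s / z) * (s / z^2)) * z^m - s^j * exp (- s / z) * (of_nat m * z^(m-1))) / (z^m * z^m)) (at z)"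
    using assms by (auto intro!: derivative_eq_intros simp: power2_eq_square field_simps)
  moreover have "(s ^ j * (exp (- s / z) * (s / z^2)) * z^m - s^j * exp (- s / z) * (of_nat m * z^(m-1))) / (z^m * z^m)
     = Tm (m+2) (Suc j) s z - of_nat m * Tm (Suc m) j s z"
    using assms by (cases m) (simp_all add: Tm_def field_simps power2_eq_square)
  ultimately show ?thesis by (simp add: Tm_def[abs_def])
qed


definition Fk :: "real \<Rightarrow> (nat \<Rightarrow> real) \<Rightarrow> nat \<Rightarrow> complex \<Rightarrow> complex \<Rightarrow> complex" where
  "Fk c a k s z = of_real c / z ^ (k+1) + (\<Sum>j\<le>k. of_real (a j) * Tm (k+1+j) j s z)"

lemma Fk_deriv:
  assumes "z \<noteq> 0"
  shows "(Fk c a k s has_field_derivative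
     (of_real c * (- of_nat (k+1)) / z ^ (k+2) +
      (\<Sum>j\<le>k. of_real (a j) * (Tm (k+1+j+2) (Suc j) s z - of_nat (k+1+j) * Tm (Suc (k+1+j)) j s z)))) (at z)"
proof -
  have d1: "((\<lambda>z. of_real c / z ^ (k+1)) has_field_derivative of_real c * (- of_nat (k+1)) / z ^ (k+2)) (at z)"
    using assms apply (auto intro!: derivative_eq_intros simp: field_simps power2_eq_square)
    by (metis Suc_pred power_Suc)
  have d2: "((\<lambda>z. \<Sum>j\<le>k. of_real (a j) * Tm (k+1+j) j s z) has_field_derivative
      (\<Sum>j\<le>k. of_real (a j) * (Tm (k+1+j+2) (Suc j) s z - of_nat (k+1+j) * Tm (Suc (k+1+j)) j s z))) (at z)"
    by (intro DERIV_sum DERIV_cmult Tm_deriv assms)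
  show ?thesis unfolding Fk_def[abs_def] by (rule DERIV_add[OF d1 d2])
qed

lemma Fk_step:
  "of_real c * (- of_nat (k+1)) / z ^ (k+2) +
      (\<Sum>j\<le>k. of_real (a j) * (Tm (k+1+j+2) (Suc j) s z - of_nat (k+1+j) * Tm (Suc (k+1+j)) j s z))
   = Fk (- real (k+1) * c) (\<lambda>j. (if j = 0 then 0 else a (j-1)) - (if j \<le> k then real (k+1+j) * a j else 0)) (Suc k) s z"
proof -
  have A: "(\<Sum>j\<le>Suc k. of_real (if j = 0 then 0 else a (j-1)) * Tm (Suc k+1+j) j s z)
      = (\<Sum>j\<le>k. of_real (a j) * Tm (k+1+j+2) (Suc j) s z)"
    by (subst sum.atMost_Suc_shift) simp
  have B: "(\<Sum>j\<le>Suc k. of_real (if j \<le> k then real (k+1+j) * a j else 0) * Tm (Suc k+1+j) j s z)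
      = (\<Sum>j\<le>k. of_real (a j) * (of_nat (k+1+j) * Tm (Suc (k+1+j)) j s z))"
    by (subst sum.atMost_Suc) (auto intro!: sum.cong)
  show ?thesis
    unfolding Fk_def of_real_diff ring_distribs sum_subtractf A B sum.distrib
    by (simp add: field_simps)
qed


lemma hv_formula: "\<exists>c a. \<forall>s u. u > 0 \<longrightarrow> higher_vderiv k (\<lambda>x. Hc s (of_real x)) u = Fk c a k s (of_real u)"
proof (induction k)
  case 0
  show ?case
    by (rule exI[of _ "-1"], rule exI[of _ "\<lambda>_. 1"])
       (auto simp: Fk_def Tm_def Hc_def field_simps)
next
  case (Suc k)
  then obtain c a where ca: "\<And>s u. u > 0 \<Longrightarrow> higher_vderiv k (\<lambda>x. Hc s (of_real x)) u = Fk c a k s (of_real u)"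
    by blast
  show ?case
  proof (intro exI allI impI)
    fix s and u :: real
    assume u: "u > 0"
    have ev: "eventually (\<lambda>y. y \<in> UNIV \<longrightarrow> higher_vderiv k (\<lambda>x. Hc s (of_real x)) y = Fk c a k s (of_real y)) (nhds u)"
      using eventually_nhds_in_open[of "{0<..}" u] u by (auto elim!: eventually_mono simp: ca)
    have "higher_vderiv (Suc k) (\<lambda>x. Hc s (of_real x)) u = vector_derivative (\<lambda>y. Fk c a k s (of_real y)) (at u)"
      using vector_derivative_cong_eq[OF ev refl refl] by simp
    also have "\<dots> = Fk (- real (k+1) * c) (\<lambda>j. (if j = 0 then 0 else a (j-1)) - (if j \<le> k then real (k+1+j) * a j else 0)) (Suc k) s (of_real u)"
      unfolding Fk_step[symmetric]
      by (rule vector_derivative_at, rule has_vector_derivative_real_field, rule Fk_deriv) (use u in simp)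
    finally show "higher_vderiv (Suc k) (\<lambda>x. Hc s (of_real x)) u = Fk (- real (k+1) * c) (\<lambda>j. (if j = 0 then 0 else a (j-1)) - (if j \<le> k then real (k+1+j) * a j else 0)) (Suc k) s (of_real u)" .
  qed
qed

lemma pow_cmp:
  fixes S u :: real
  assumes "0 < u" "u \<le> S" "j \<le> k"
  shows "S ^ j / u ^ (k+1+j) \<le> S ^ k / u ^ (2*k+1)"
proof -
  have "1 \<le> (S / u) ^ (k - j)" using assms by (intro one_le_power) (simp add: field_simps)
  moreover have "0 \<le> S ^ j / u ^ (k+1+j)" using assms by simp
  ultimately have "S ^ j / u ^ (k+1+j) * 1 \<le> S ^ j / u ^ (k+1+j) * (S / u) ^ (k - j)"
    by (intro mult_left_mono)
  then have "S ^ j / u ^ (k+1+j) \<le> S ^ j / u ^ (k+1+j) * (S / u) ^ (k - j)" by simp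
  also have "\<dots> = S ^ k / u ^ (2*k+1)"
  proof -
    have "S ^ j * S ^ (k - j) = S ^ k" using assms by (simp flip: power_add)
    moreover have "u ^ (k+1+j) * u ^ (k - j) = u ^ (2*k+1)" using assms by (simp flip: power_add add: mult_2)
    ultimately show ?thesis by (simp add: power_divide field_simps)
  qed
  finally show ?thesis .
qed

lemma Tm_bound:
  assumes "u > 0" "Re s = 1"
  shows "cmod (Tm m j s (of_real u)) \<le> cmod s ^ j / u ^ m"
proof -
  have "Re (- s / of_real u) = - 1 / u" using assms by (simp add: Re_divide_of_real)
  then have "cmod (exp (- s / of_real u)) \<le> 1" using assms by (simp add: norm_exp_eq_Re)
  then show ?thesis using assms
    by (auto simp: Tm_def norm_mult norm_divide norm_power intro!: divide_right_mono mult_left_le)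
qed

lemma Fk_bound:
  assumes "1 \<le> u" "Re s = 1" "u < cmod s"
  shows "cmod (Fk c a k s (of_real u)) \<le> (\<bar>c\<bar> + (\<Sum>j\<le>k. \<bar>a j\<bar>)) * cmod s ^ k / u ^ (2*k+1)"
proof -
  let ?B = "cmod s ^ k / u ^ (2*k+1)"
  have u: "u > 0" using assms by simp
  have "cmod (Fk c a k s (of_real u)) \<le> cmod (of_real c / of_real u ^ (k+1)) + cmod (\<Sum>j\<le>k. of_real (a j) * Tm (k+1+j) j s (of_real u))"
    unfolding Fk_def by (rule norm_triangle_ineq)
  also have "\<dots> \<le> \<bar>c\<bar> * ?B + (\<Sum>j\<le>k. \<bar>a j\<bar> * ?B)"
  proof (rule add_mono)
    have "cmod (of_real c / of_real u ^ (k+1)) = \<bar>c\<bar> * (cmod s ^ 0 / u ^ (k+1+0))"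
      using u by (simp add: norm_divide norm_power norm_mult)
    also have "\<dots> \<le> \<bar>c\<bar> * ?B"
      by (intro mult_left_mono pow_cmp) (use assms in auto)
    finally show "cmod (of_real c / of_real u ^ (k+1)) \<le> \<bar>c\<bar> * ?B" .
    have "cmod (\<Sum>j\<le>k. of_real (a j) * Tm (k+1+j) j s (of_real u)) \<le> (\<Sum>j\<le>k. cmod (of_real (a j) * Tm (k+1+j) j s (of_real u)))"
      by (rule norm_sum)
    also have "\<dots> \<le> (\<Sum>j\<le>k. \<bar>a j\<bar> * ?B)"
    proof (rule sum_mono)
      fix j assume j: "j \<in> {..k}"
      have "cmod (of_real (a j) * Tm (k+1+j) j s (of_real u)) = \<bar>a j\<bar> * cmod (Tm (k+1+j) j s (of_real u))"
        by (simp add: norm_mult)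
      also have "\<dots> \<le> \<bar>a j\<bar> * (cmod s ^ j / u ^ (k+1+j))"
        by (intro mult_left_mono Tm_bound) (use u assms in auto)
      also have "\<dots> \<le> \<bar>a j\<bar> * ?B"
        by (intro mult_left_mono pow_cmp) (use assms j in auto)
      finally show "cmod (of_real (a j) * Tm (k+1+j) j s (of_real u)) \<le> \<bar>a j\<bar> * ?B" .
    qed
    finally show "cmod (\<Sum>j\<le>k. of_real (a j) * Tm (k+1+j) j s (of_real u)) \<le> (\<Sum>j\<le>k. \<bar>a j\<bar> * ?B)" .
  qed
  also have "\<dots> = (\<bar>c\<bar> + (\<Sum>j\<le>k. \<bar>a j\<bar>)) * ?B"
    by (simp only: sum_distrib_right distrib_right)
  finally show ?thesis by simp
qed

theorem lemma8:
  fixes \<nu> :: nat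
  assumes "\<nu> \<ge> 1"
  shows "\<exists>C. \<forall>u s. u \<ge> 1 \<and> Re s = 1 \<and> cmod s > u \<longrightarrow>
           cmod (higher_vderiv \<nu> (\<lambda>x. G x s) u) \<le> C * cmod s ^ (\<nu> - 1) / u ^ (2 * \<nu> - 1)"
proof -
  obtain k where k: "\<nu> = Suc k" using assms by (cases \<nu>) auto
  obtain c a where ca: "\<And>s u. u > 0 \<Longrightarrow> higher_vderiv k (\<lambda>x. Hc s (of_real x)) u = Fk c a k s (of_real u)"
    using hv_formula by blast
  show ?thesis
  proof (intro exI allI impI)
    fix u s assume h: "1 \<le> u \<and> Re s = 1 \<and> u < cmod s"
    then have u: "u > 0" by simp
    have "higher_vderiv \<nu> (\<lambda>x. G x s) u = Fk c a k s (of_real u)"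
      using G_hv[OF u] ca[OF u] k by simp
    moreover have "2 * \<nu> - 1 = 2 * k + 1" "\<nu> - 1 = k" using k by auto
    ultimately show "cmod (higher_vderiv \<nu> (\<lambda>x. G x s) u) \<le> (\<bar>c\<bar> + (\<Sum>j\<le>k. \<bar>a j\<bar>)) * cmod s ^ (\<nu> - 1) / u ^ (2 * \<nu> - 1)"
      using Fk_bound[of u s c a k] h by simp
  qed
qed

end
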